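(* If $g(n)$ is bounded by a constant, then the smallest constant $C$ with $g(n)\le C$ for all $n$ satisfies $C\le 4$; the same holds for $h(n)$. Consequently, if $f(n)$ is bounded by a constant, then the smallest such constant is at most $16$.
   Context: For a digraph $D$, $\chi(D)$ is the chromatic number of its underlying graph; $D^{-1}$ is $D$ with arcs reversed; $D_1\times D_2$ has vertex set $V(D_1)\times V(D_2)$ and arc $(x,y)\to(x',y')$ iff $(x,x')$ is an arc of $D_1$ and $(y,y')$ an arc of $D_2$ (graph product $G\times H$ analogously with edges). $f(n)=\min\{\chi(G\times H):\chi(G),\chi(H)\ge n\}$ over graphs; $g(n)=\min\{\chi(D_1\times D_2):\chi(D_1),\chi(D_2)\ge n\}$ and $h(n)=\min\{\max\{\chi(D_1\times D_2),\chi(D_1\times D_2^{-1})\}:\chi(D_1),\chi(D_2)\ge n\}$ over digraphs (digons allowed). *)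

theory Defs
  imports Main
begin

definition is_digraph :: "'a set \<Rightarrow> ('a \<times> 'a) set \<Rightarrow> bool" where
  "is_digraph V A \<longleftrightarrow> finite V \<and> A \<subseteq> V \<times> V \<and> (\<forall>x. (x, x) \<notin> A)"

definition is_graph :: "'a set \<Rightarrow> ('a \<times> 'a) set \<Rightarrow> bool" where
  "is_graph V E \<longleftrightarrow> is_digraph V E \<and> sym E"

definition chi :: "'a set \<Rightarrow> ('a \<times> 'a) set \<Rightarrow> nat" where
  "chi V A = (LEAST k. \<exists>c :: 'a \<Rightarrow> nat. (\<forall>x\<in>V. c x < k) \<and> (\<forall>(x, y)\<in>A. c x \<noteq> c y))"

definition prod_arcs :: "('a \<times> 'a) set \<Rightarrow> ('b \<times> 'b) set \<Rightarrow> (('a \<times> 'b) \<times> ('a \<times> 'b)) set" where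
  "prod_arcs A1 A2 = {((x, y), (x', y')). (x, x') \<in> A1 \<and> (y, y') \<in> A2}"

text \<open>f, g, h as in the paper; vertices of the factors range over nat
  (every finite graph/digraph is isomorphic to one on nat).\<close>
definition f_fun :: "nat \<Rightarrow> nat" where
  "f_fun n = Inf {chi (V1 \<times> V2) (prod_arcs E1 E2) | (V1 :: nat set) E1 (V2 :: nat set) E2.
     is_graph V1 E1 \<and> is_graph V2 E2 \<and> chi V1 E1 \<ge> n \<and> chi V2 E2 \<ge> n}"

definition g_fun :: "nat \<Rightarrow> nat" where
  "g_fun n = Inf {chi (V1 \<times> V2) (prod_arcs A1 A2) | (V1 :: nat set) A1 (V2 :: nat set) A2.
     is_digraph V1 A1 \<and> is_digraph V2 A2 \<and> chi V1 A1 \<ge> n \<and> chi V2 A2 \<ge> n}"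

definition h_fun :: "nat \<Rightarrow> nat" where
  "h_fun n = Inf {max (chi (V1 \<times> V2) (prod_arcs A1 A2)) (chi (V1 \<times> V2) (prod_arcs A1 (A2\<inverse>)))
     | (V1 :: nat set) A1 (V2 :: nat set) A2.
     is_digraph V1 A1 \<and> is_digraph V2 A2 \<and> chi V1 A1 \<ge> n \<and> chi V2 A2 \<ge> n}"

end

theory Submission
  imports Defs "HOL-Library.Nat_Bijection"
begin


lemma chi_le:
  assumes "\<forall>x\<in>V. c x < k" "\<forall>(x,y)\<in>A. c x \<noteq> c y"
  shows "chi V A \<le> k"
  unfolding chi_def by (rule Least_le) (use assms in blast)

lemma chi_le_card:
  assumes "finite T" "\<forall>x\<in>V. c x \<in> T" "\<forall>(x,y)\<in>A. c x \<noteq> c y" "A \<subseteq> V \<times> V"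
  shows "chi V A \<le> card T"
proof -
  obtain h where h: "bij_betw h T {0..<card T}" using ex_bij_betw_finite_nat[OF assms(1)] by blast
  have "\<forall>x\<in>V. (h \<circ> c) x < card T" using h assms(2) bij_betwE by fastforce
  moreover have "\<forall>(x,y)\<in>A. (h \<circ> c) x \<noteq> (h \<circ> c) y"
  proof (intro ballI, clarify)
    fix x y assume xy: "(x,y) \<in> A" "(h \<circ> c) x = (h \<circ> c) y"
    then have "x \<in> V" "y \<in> V" using assms(4) by auto
    then have "c x = c y" using xy h assms(2) unfolding bij_betw_def inj_on_def by auto
    then show False using xy assms(3) by auto
  qed
  ultimately show ?thesis by (rule chi_le)
qed

lemma chi_ex:
  assumes "is_digraph V A"
  shows "\<exists>c. (\<forall>x\<in>V. c x < chi V A) \<and> (\<forall>(x,y)\<in>A. c x \<noteq> c y)"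
proof -
  have fin: "finite V" and sub: "A \<subseteq> V \<times> V" and irr: "\<forall>x. (x,x) \<notin> A"
    using assms unfolding is_digraph_def by auto
  obtain h where h: "bij_betw h V {0..<card V}" using ex_bij_betw_finite_nat[OF fin] by blast
  have "\<exists>k c. (\<forall>x\<in>V. c x < k) \<and> (\<forall>(x,y)\<in>A. c x \<noteq> (c y :: nat))"
  proof (intro exI conjI)
    show "\<forall>x\<in>V. h x < card V" using h bij_betwE by fastforce
    show "\<forall>(x,y)\<in>A. h x \<noteq> h y"
    proof (intro ballI, clarify)
      fix x y assume xy: "(x,y) \<in> A" "h x = h y"
      then have "x \<in> V" "y \<in> V" using sub by auto
      then have "x = y" using xy h unfolding bij_betw_def inj_on_def by auto
      then show False using xy irr by auto
    qed
  qed
  then show ?thesis unfolding chi_def by (rule LeastI_ex)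
qed

lemma chi_mono:
  assumes "is_digraph V B" "A \<subseteq> B"
  shows "chi V A \<le> chi V B"
proof -
  obtain c where "\<forall>x\<in>V. c x < chi V B" "\<forall>(x,y)\<in>B. c x \<noteq> c y" using chi_ex[OF assms(1)] by blast
  then show ?thesis using assms(2) by (intro chi_le) auto
qed

definition Kn :: "nat \<Rightarrow> (nat \<times> nat) set" where
  "Kn n = {(x,y). x \<in> {0..<n} \<and> y \<in> {0..<n} \<and> x \<noteq> y}"

lemma Kn_graph: "is_graph {0..<n} (Kn n)"
  unfolding is_graph_def is_digraph_def Kn_def sym_def by auto

lemma Kn_chi: "n \<le> chi {0..<n} (Kn n)"
proof -
  obtain c where c: "\<forall>x\<in>{0..<n}. c x < chi {0..<n} (Kn n)" "\<forall>(x,y)\<in>Kn n. c x \<noteq> c y"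
    using chi_ex Kn_graph unfolding is_graph_def by blast
  have "inj_on c {0..<n}"
  proof (rule inj_onI, rule ccontr)
    fix x y assume "x \<in> {0..<n}" "y \<in> {0..<n}" "c x = c y" "x \<noteq> y"
    then have "(x,y) \<in> Kn n" unfolding Kn_def by auto
    then have "c x \<noteq> c y" using c(2) by auto
    then show False using \<open>c x = c y\<close> by simp
  qed
  moreover have "c ` {0..<n} \<subseteq> {0..<chi {0..<n} (Kn n)}" using c(1) by auto
  ultimately have "card {0..<n} \<le> card {0..<chi {0..<n} (Kn n)}"
    by (intro card_inj_on_le) auto
  then show ?thesis by simp
qed

lemma prod_digraph:
  assumes "is_digraph V1 A1" "is_digraph V2 A2"
  shows "is_digraph (V1 \<times> V2) (prod_arcs A1 A2)"
  using assms unfolding is_digraph_def prod_arcs_def by auto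

lemma conv_digraph: "is_digraph V A \<Longrightarrow> is_digraph V (A\<inverse>)"
  unfolding is_digraph_def by auto

definition lv :: "(nat \<times> nat) set \<Rightarrow> nat set" where
  "lv A = prod_encode ` A"
definition la :: "(nat \<times> nat) set \<Rightarrow> (nat \<times> nat) set" where
  "la A = {(prod_encode (a,b), prod_encode (b,c)) | a b c. (a,b) \<in> A \<and> (b,c) \<in> A}"

lemma line_digraph:
  assumes "is_digraph V A" shows "is_digraph (lv A) (la A)"
proof -
  have fin: "finite A" using assms unfolding is_digraph_def by (meson finite_SigmaI finite_subset)
  have "\<forall>x. (x,x) \<notin> la A"
  proof (intro allI notI)
    fix x assume "(x,x) \<in> la A"
    then obtain a b c where "(a,b) \<in> A" "(b,c) \<in> A" "prod_encode (a,b) = prod_encode (b,c)"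
      unfolding la_def by auto
    then show False using assms unfolding is_digraph_def
      by (metis prod_encode_inverse prod.inject)
  qed
  then show ?thesis using fin unfolding is_digraph_def lv_def la_def by auto
qed

lemma line_lower:
  assumes "is_digraph V A"
  shows "chi V A \<le> 2 ^ chi (lv A) (la A)"
proof -
  let ?k = "chi (lv A) (la A)"
  obtain d where d: "\<forall>z\<in>lv A. d z < ?k" "\<forall>(x,y)\<in>la A. d x \<noteq> d y"
    using chi_ex[OF line_digraph[OF assms]] by blast
  define col where "col v = {d (prod_encode (w,v)) | w. (w,v) \<in> A}" for v
  have "chi V A \<le> card (Pow {0..<?k})"
  proof (rule chi_le_card)
    show "\<forall>x\<in>V. col x \<in> Pow {0..<?k}" using d(1) unfolding col_def lv_def by auto
    show "A \<subseteq> V \<times> V" using assms unfolding is_digraph_def by auto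
    show "\<forall>(x,y)\<in>A. col x \<noteq> col y"
    proof (intro ballI, clarify)
      fix u v assume uv: "(u,v) \<in> A" "col u = col v"
      have "d (prod_encode (u,v)) \<in> col v" using uv(1) unfolding col_def by auto
      then have "d (prod_encode (u,v)) \<in> col u" using uv(2) by (simp only:)
      then obtain w where w: "(w,u) \<in> A" "d (prod_encode (w,u)) = d (prod_encode (u,v))"
        unfolding col_def by auto
      have "(prod_encode (w,u), prod_encode (u,v)) \<in> la A" using w(1) uv(1) unfolding la_def by auto
      then show False using d(2) w(2) by auto
    qed
  qed auto
  then show ?thesis by (simp add: card_Pow)
qed



lemma antichain:
  assumes "(5::nat) \<le> k"
  shows "\<exists>\<phi>. inj_on \<phi> {0..<k} \<and> \<phi> ` {0..<k} \<subseteq> {S. S \<subseteq> {0..<k-1} \<and> card S = 2}"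
proof -
  have c: "card {S. S \<subseteq> {0..<k-1} \<and> card S = 2} = (k-1) choose 2"
    using n_subsets[of "{0..<k-1}" 2] by simp
  have "4 * (k-2) \<le> (k-1)*(k-2)" using assms by (intro mult_le_mono) auto
  then have "2 * k \<le> (k-1)*(k-2)" using assms by linarith
  then have "k \<le> (k-1)*(k-2) div 2" by linarith
  then have "k \<le> (k-1)*(k-1-1) div 2" by (simp add: diff_diff_left numeral_2_eq_2)
  then have "card {0..<k} \<le> card {S. S \<subseteq> {0..<k-1} \<and> card S = 2}"
    using c by (simp add: choose_two)
  from card_le_inj[OF _ _ this] show ?thesis by auto
qed

lemma diff_nonempty:
  fixes k :: nat
  assumes "\<phi> ` {0..<k} \<subseteq> {S. S \<subseteq> {0..<k-1} \<and> card S = (2::nat)}" "inj_on \<phi> {0..<k}"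
    "a < k" "b < k" "a \<noteq> b"
  shows "\<phi> a - \<phi> b \<noteq> {}"
proof
  assume "\<phi> a - \<phi> b = {}"
  then have sub: "\<phi> a \<subseteq> \<phi> b" by auto
  have A1: "\<phi> a \<in> {S. S \<subseteq> {0..<k-1} \<and> card S = 2}"
    by (rule subsetD[OF assms(1)], rule imageI) (simp add: assms(3))
  have A2: "\<phi> b \<in> {S. S \<subseteq> {0..<k-1} \<and> card S = 2}"
    by (rule subsetD[OF assms(1)], rule imageI) (simp add: assms(4))
  note A = A1 A2
  then have ca: "card (\<phi> a) = 2" and cb: "card (\<phi> b) = 2" and sb: "\<phi> b \<subseteq> {0..<k-1}" by auto
  have fb: "finite (\<phi> b)" using sb finite_subset by blast
  have "\<phi> a = \<phi> b" using card_subset_eq[OF fb sub] ca cb by simp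
  then have "a = b" using inj_onD[OF assms(2)] assms(3,4) by simp
  then show False using assms(5) by simp
qed

lemma line_upper:
  fixes k :: nat
  assumes "is_digraph V1 A1" "is_digraph V2 A2" "5 \<le> k"
    and c: "\<forall>x\<in>V1\<times>V2. c x < k" "\<forall>(x,y)\<in>prod_arcs A1 A2. c x \<noteq> c y"
  shows "chi (lv A1 \<times> lv A2) (prod_arcs (la A1) (la A2)) \<le> k - 1"
proof -
  obtain \<phi> where \<phi>: "inj_on \<phi> {0..<k}" "\<phi> ` {0..<k} \<subseteq> {S. S \<subseteq> {0..<k-1} \<and> card S = 2}"
    using antichain[OF assms(3)] by blast
  define col where "col z = (SOME i. i \<in> \<phi> (c (fst (prod_decode (fst z)), fst (prod_decode (snd z))))
        - \<phi> (c (snd (prod_decode (fst z)), snd (prod_decode (snd z)))))" for z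
  have key: "col (prod_encode (x,x'), prod_encode (y,y')) \<in> \<phi> (c (x,y)) - \<phi> (c (x',y'))"
    if "(x,x') \<in> A1" "(y,y') \<in> A2" for x x' y y'
  proof -
    have "(x,y) \<in> V1 \<times> V2" "(x',y') \<in> V1 \<times> V2" using that assms(1,2) unfolding is_digraph_def by auto
    then have lt: "c (x,y) < k" "c (x',y') < k" using c(1) by auto
    have "((x,y),(x',y')) \<in> prod_arcs A1 A2" using that unfolding prod_arcs_def by auto
    then have "c (x,y) \<noteq> c (x',y')" using c(2) by auto
    then obtain i0 where "i0 \<in> \<phi> (c (x,y)) - \<phi> (c (x',y'))" using diff_nonempty[OF \<phi>(2,1) lt] by blast
    then have "(SOME i. i \<in> \<phi> (c (x,y)) - \<phi> (c (x',y'))) \<in> \<phi> (c (x,y)) - \<phi> (c (x',y'))" by (rule someI)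
    then show ?thesis unfolding col_def by (simp only: prod_encode_inverse fst_conv snd_conv)
  qed
  have "chi (lv A1 \<times> lv A2) (prod_arcs (la A1) (la A2)) \<le> card {0..<k-1}"
  proof (rule chi_le_card)
    show "\<forall>z\<in>lv A1 \<times> lv A2. col z \<in> {0..<k-1}"
    proof
      fix z assume "z \<in> lv A1 \<times> lv A2"
      then obtain x x' y y' where z: "z = (prod_encode (x,x'), prod_encode (y,y'))" "(x,x') \<in> A1" "(y,y') \<in> A2"
        unfolding lv_def by auto
      have "x \<in> V1" "y \<in> V2" using z(2,3) assms(1,2) unfolding is_digraph_def by auto
      then have "c (x,y) < k" using c(1) by auto
      then have "c (x,y) \<in> {0..<k}" by simp
      then have "\<phi> (c (x,y)) \<in> \<phi> ` {0..<k}" by (rule imageI)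
      then have "\<phi> (c (x,y)) \<in> {S. S \<subseteq> {0..<k-1} \<and> card S = 2}" using \<phi>(2) by (rule rev_subsetD)
      then have "\<phi> (c (x,y)) \<subseteq> {0..<k-1}" by simp
      then show "col z \<in> {0..<k-1}" using key[OF z(2,3)] z(1) by auto
    qed
    show "prod_arcs (la A1) (la A2) \<subseteq> (lv A1 \<times> lv A2) \<times> (lv A1 \<times> lv A2)"
      unfolding prod_arcs_def la_def lv_def by auto
    show "\<forall>(z,w)\<in>prod_arcs (la A1) (la A2). col z \<noteq> col w"
    proof (intro ballI, clarify)
      fix p q p' q' assume "((p,q),(p',q')) \<in> prod_arcs (la A1) (la A2)" "col (p,q) = col (p',q')"
      then obtain a b cc e f g where e: "p = prod_encode (a,b)" "p' = prod_encode (b,cc)" "(a,b) \<in> A1" "(b,cc) \<in> A1"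
        "q = prod_encode (e,f)" "q' = prod_encode (f,g)" "(e,f) \<in> A2" "(f,g) \<in> A2"
        "col (p,q) = col (p',q')"
        unfolding prod_arcs_def la_def by auto
      have "col (p,q) \<notin> \<phi> (c (b,f))" using key[OF e(3,7)] e(1,5) by auto
      moreover have "col (p',q') \<in> \<phi> (c (b,f))" using key[OF e(4,8)] e(2,6) by auto
      ultimately show False using e(9) by simp
    qed
  qed auto
  then show ?thesis by simp
qed

lemma line_upper_conv:
  fixes k :: nat
  assumes "is_digraph V1 A1" "is_digraph V2 A2" "5 \<le> k"
    and c: "\<forall>x\<in>V1\<times>V2. c x < k" "\<forall>(x,y)\<in>prod_arcs A1 (A2\<inverse>). c x \<noteq> c y"
  shows "chi (lv A1 \<times> lv A2) (prod_arcs (la A1) ((la A2)\<inverse>)) \<le> k - 1"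
proof -
  obtain \<phi> where \<phi>: "inj_on \<phi> {0..<k}" "\<phi> ` {0..<k} \<subseteq> {S. S \<subseteq> {0..<k-1} \<and> card S = 2}"
    using antichain[OF assms(3)] by blast
  define col where "col z = (SOME i. i \<in> \<phi> (c (fst (prod_decode (fst z)), snd (prod_decode (snd z))))
        - \<phi> (c (snd (prod_decode (fst z)), fst (prod_decode (snd z)))))" for z
  have key: "col (prod_encode (x,x'), prod_encode (y,y')) \<in> \<phi> (c (x,y')) - \<phi> (c (x',y))"
    if "(x,x') \<in> A1" "(y,y') \<in> A2" for x x' y y'
  proof -
    have "(x,y') \<in> V1 \<times> V2" "(x',y) \<in> V1 \<times> V2" using that assms(1,2) unfolding is_digraph_def by auto
    then have lt: "c (x,y') < k" "c (x',y) < k" using c(1) by auto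
    have "((x,y'),(x',y)) \<in> prod_arcs A1 (A2\<inverse>)" using that unfolding prod_arcs_def by auto
    then have "c (x,y') \<noteq> c (x',y)" using c(2) by auto
    then obtain i0 where "i0 \<in> \<phi> (c (x,y')) - \<phi> (c (x',y))" using diff_nonempty[OF \<phi>(2,1) lt] by blast
    then have "(SOME i. i \<in> \<phi> (c (x,y')) - \<phi> (c (x',y))) \<in> \<phi> (c (x,y')) - \<phi> (c (x',y))" by (rule someI)
    then show ?thesis unfolding col_def by (simp only: prod_encode_inverse fst_conv snd_conv)
  qed
  have "chi (lv A1 \<times> lv A2) (prod_arcs (la A1) ((la A2)\<inverse>)) \<le> card {0..<k-1}"
  proof (rule chi_le_card)
    show "\<forall>z\<in>lv A1 \<times> lv A2. col z \<in> {0..<k-1}"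
    proof
      fix z assume "z \<in> lv A1 \<times> lv A2"
      then obtain x x' y y' where z: "z = (prod_encode (x,x'), prod_encode (y,y'))" "(x,x') \<in> A1" "(y,y') \<in> A2"
        unfolding lv_def by auto
      have "x \<in> V1" "y' \<in> V2" using z(2,3) assms(1,2) unfolding is_digraph_def by auto
      then have "c (x,y') < k" using c(1) by auto
      then have "c (x,y') \<in> {0..<k}" by simp
      then have "\<phi> (c (x,y')) \<in> \<phi> ` {0..<k}" by (rule imageI)
      then have "\<phi> (c (x,y')) \<in> {S. S \<subseteq> {0..<k-1} \<and> card S = 2}" using \<phi>(2) by (rule rev_subsetD)
      then have "\<phi> (c (x,y')) \<subseteq> {0..<k-1}" by simp
      then show "col z \<in> {0..<k-1}" using key[OF z(2,3)] z(1) by auto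
    qed
    show "prod_arcs (la A1) ((la A2)\<inverse>) \<subseteq> (lv A1 \<times> lv A2) \<times> (lv A1 \<times> lv A2)"
      unfolding prod_arcs_def la_def lv_def by auto
    show "\<forall>(z,w)\<in>prod_arcs (la A1) ((la A2)\<inverse>). col z \<noteq> col w"
    proof (intro ballI, clarify)
      fix p q p' q' assume "((p,q),(p',q')) \<in> prod_arcs (la A1) ((la A2)\<inverse>)" "col (p,q) = col (p',q')"
      then obtain a b cc e f g where e: "p = prod_encode (a,b)" "p' = prod_encode (b,cc)" "(a,b) \<in> A1" "(b,cc) \<in> A1"
        "q' = prod_encode (e,f)" "q = prod_encode (f,g)" "(e,f) \<in> A2" "(f,g) \<in> A2"
        "col (p,q) = col (p',q')"
        unfolding prod_arcs_def la_def by auto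
      have "col (p,q) \<notin> \<phi> (c (b,f))" using key[OF e(3,8)] e(1,6) by auto
      moreover have "col (p',q') \<in> \<phi> (c (b,f))" using key[OF e(4,7)] e(2,5) by auto
      ultimately show False using e(9) by simp
    qed
  qed auto
  then show ?thesis by simp
qed



lemma Kn_in:
  "\<exists>V E. is_graph V (E::(nat\<times>nat) set) \<and> n \<le> chi V E"
  using Kn_graph Kn_chi by blast

lemma set_ne_g: "{chi (V1 \<times> V2) (prod_arcs A1 A2) | (V1 :: nat set) A1 (V2 :: nat set) A2.
     is_digraph V1 A1 \<and> is_digraph V2 A2 \<and> chi V1 A1 \<ge> n \<and> chi V2 A2 \<ge> n} \<noteq> {}"
proof -
  obtain V E where "is_graph V (E::(nat\<times>nat) set)" "n \<le> chi V E" using Kn_in by blast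
  then show ?thesis unfolding is_graph_def by blast
qed

lemma set_ne_h: "{max (chi (V1 \<times> V2) (prod_arcs A1 A2)) (chi (V1 \<times> V2) (prod_arcs A1 (A2\<inverse>)))
     | (V1 :: nat set) A1 (V2 :: nat set) A2.
     is_digraph V1 A1 \<and> is_digraph V2 A2 \<and> chi V1 A1 \<ge> n \<and> chi V2 A2 \<ge> n} \<noteq> {}"
proof -
  obtain V E where "is_graph V (E::(nat\<times>nat) set)" "n \<le> chi V E" using Kn_in by blast
  then show ?thesis unfolding is_graph_def by blast
qed

lemma set_ne_f: "{chi (V1 \<times> V2) (prod_arcs E1 E2) | (V1 :: nat set) E1 (V2 :: nat set) E2.
     is_graph V1 E1 \<and> is_graph V2 E2 \<and> chi V1 E1 \<ge> n \<and> chi V2 E2 \<ge> n} \<noteq> {}"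
proof -
  obtain V E where "is_graph V (E::(nat\<times>nat) set)" "n \<le> chi V E" using Kn_in by blast
  then show ?thesis by blast
qed

lemma line_chi_ge:
  assumes "is_digraph V A" "2 ^ N \<le> chi V A"
  shows "N \<le> chi (lv A) (la A)"
proof -
  have "(2::nat) ^ N \<le> 2 ^ chi (lv A) (la A)" using line_lower[OF assms(1)] assms(2) by linarith
  then show ?thesis by (rule power_le_imp_le_exp[rotated]) simp
qed

lemma g_part:
  assumes "\<exists>C::nat. \<forall>n. g_fun n \<le> C"
  shows "(LEAST C::nat. \<forall>n. g_fun n \<le> C) \<le> 4"
proof (rule ccontr)
  obtain C0 where C0: "C0 = (LEAST C::nat. \<forall>n. g_fun n \<le> C)" by blast
  assume "\<not> (LEAST C::nat. \<forall>n. g_fun n \<le> C) \<le> 4"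
  then have C5: "5 \<le> C0" using C0 by simp
  have bnd: "\<forall>n. g_fun n \<le> C0" unfolding C0 using LeastI_ex[OF assms] .
  have "\<not> (\<forall>n. g_fun n \<le> C0 - 1)"
  proof
    assume "\<forall>n. g_fun n \<le> C0 - 1"
    then have "(LEAST C::nat. \<forall>n. g_fun n \<le> C) \<le> C0 - 1" by (rule Least_le)
    then show False using C0 C5 by simp
  qed
  then obtain N where "\<not> g_fun N \<le> C0 - 1" by blast
  then have gN: "g_fun N = C0" using bnd[rule_format, of N] by linarith
  define M where "M = (2::nat) ^ N"
  have "g_fun M \<in> {chi (V1 \<times> V2) (prod_arcs A1 A2) | (V1 :: nat set) A1 (V2 :: nat set) A2.
     is_digraph V1 A1 \<and> is_digraph V2 A2 \<and> chi V1 A1 \<ge> M \<and> chi V2 A2 \<ge> M}"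
    unfolding g_fun_def by (rule Inf_nat_def1[OF set_ne_g])
  then obtain V1 A1 V2 A2 where D: "is_digraph (V1::nat set) A1" "is_digraph (V2::nat set) A2" "M \<le> chi V1 A1" "M \<le> chi V2 A2"
    "g_fun M = chi (V1 \<times> V2) (prod_arcs A1 A2)" by blast
  obtain c where c: "\<forall>x\<in>V1\<times>V2. c x < chi (V1 \<times> V2) (prod_arcs A1 A2)"
    "\<forall>(x,y)\<in>prod_arcs A1 A2. c x \<noteq> c y"
    using chi_ex[OF prod_digraph[OF D(1,2)]] by blast
  have c': "\<forall>x\<in>V1\<times>V2. c x < C0" using c(1) D(5) bnd by (metis less_le_trans)
  have up: "chi (lv A1 \<times> lv A2) (prod_arcs (la A1) (la A2)) \<le> C0 - 1"
    by (rule line_upper[OF D(1,2) C5 c' c(2)])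
  have l1: "N \<le> chi (lv A1) (la A1)" using line_chi_ge[OF D(1)] D(3) M_def by simp
  have l2: "N \<le> chi (lv A2) (la A2)" using line_chi_ge[OF D(2)] D(4) M_def by simp
  have "chi (lv A1 \<times> lv A2) (prod_arcs (la A1) (la A2)) \<in> {chi (V1 \<times> V2) (prod_arcs A1 A2) | (V1 :: nat set) A1 (V2 :: nat set) A2.
     is_digraph V1 A1 \<and> is_digraph V2 A2 \<and> chi V1 A1 \<ge> N \<and> chi V2 A2 \<ge> N}"
    using line_digraph[OF D(1)] line_digraph[OF D(2)] l1 l2 by blast
  then have "g_fun N \<le> chi (lv A1 \<times> lv A2) (prod_arcs (la A1) (la A2))"
    unfolding g_fun_def by (rule cInf_lower) simp
  then show False using gN up C5 by simp
qed

lemma h_part: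
  assumes "\<exists>C::nat. \<forall>n. h_fun n \<le> C"
  shows "(LEAST C::nat. \<forall>n. h_fun n \<le> C) \<le> 4"
proof (rule ccontr)
  obtain C0 where C0: "C0 = (LEAST C::nat. \<forall>n. h_fun n \<le> C)" by blast
  assume "\<not> (LEAST C::nat. \<forall>n. h_fun n \<le> C) \<le> 4"
  then have C5: "5 \<le> C0" using C0 by simp
  have bnd: "\<forall>n. h_fun n \<le> C0" unfolding C0 using LeastI_ex[OF assms] .
  have "\<not> (\<forall>n. h_fun n \<le> C0 - 1)"
  proof
    assume "\<forall>n. h_fun n \<le> C0 - 1"
    then have "(LEAST C::nat. \<forall>n. h_fun n \<le> C) \<le> C0 - 1" by (rule Least_le)
    then show False using C0 C5 by simp
  qed
  then obtain N where "\<not> h_fun N \<le> C0 - 1" by blast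
  then have gN: "h_fun N = C0" using bnd[rule_format, of N] by linarith
  define M where "M = (2::nat) ^ N"
  have "h_fun M \<in> {max (chi (V1 \<times> V2) (prod_arcs A1 A2)) (chi (V1 \<times> V2) (prod_arcs A1 (A2\<inverse>)))
     | (V1 :: nat set) A1 (V2 :: nat set) A2.
     is_digraph V1 A1 \<and> is_digraph V2 A2 \<and> chi V1 A1 \<ge> M \<and> chi V2 A2 \<ge> M}"
    unfolding h_fun_def by (rule Inf_nat_def1[OF set_ne_h])
  then obtain V1 A1 V2 A2 where D: "is_digraph (V1::nat set) A1" "is_digraph (V2::nat set) A2" "M \<le> chi V1 A1" "M \<le> chi V2 A2"
    "h_fun M = max (chi (V1 \<times> V2) (prod_arcs A1 A2)) (chi (V1 \<times> V2) (prod_arcs A1 (A2\<inverse>)))" by blast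
  obtain c where c: "\<forall>x\<in>V1\<times>V2. c x < chi (V1 \<times> V2) (prod_arcs A1 A2)"
    "\<forall>(x,y)\<in>prod_arcs A1 A2. c x \<noteq> c y"
    using chi_ex[OF prod_digraph[OF D(1,2)]] by blast
  obtain d where d: "\<forall>x\<in>V1\<times>V2. d x < chi (V1 \<times> V2) (prod_arcs A1 (A2\<inverse>))"
    "\<forall>(x,y)\<in>prod_arcs A1 (A2\<inverse>). d x \<noteq> d y"
    using chi_ex[OF prod_digraph[OF D(1) conv_digraph[OF D(2)]]] by blast
  have c': "\<forall>x\<in>V1\<times>V2. c x < C0" using c(1) D(5) bnd by (metis less_le_trans max.bounded_iff)
  have d': "\<forall>x\<in>V1\<times>V2. d x < C0" using d(1) D(5) bnd by (metis less_le_trans max.bounded_iff)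
  have up: "chi (lv A1 \<times> lv A2) (prod_arcs (la A1) (la A2)) \<le> C0 - 1"
    by (rule line_upper[OF D(1,2) C5 c' c(2)])
  have up2: "chi (lv A1 \<times> lv A2) (prod_arcs (la A1) ((la A2)\<inverse>)) \<le> C0 - 1"
    by (rule line_upper_conv[OF D(1,2) C5 d' d(2)])
  have l1: "N \<le> chi (lv A1) (la A1)" using line_chi_ge[OF D(1)] D(3) M_def by simp
  have l2: "N \<le> chi (lv A2) (la A2)" using line_chi_ge[OF D(2)] D(4) M_def by simp
  have "max (chi (lv A1 \<times> lv A2) (prod_arcs (la A1) (la A2))) (chi (lv A1 \<times> lv A2) (prod_arcs (la A1) ((la A2)\<inverse>)))
     \<in> {max (chi (V1 \<times> V2) (prod_arcs A1 A2)) (chi (V1 \<times> V2) (prod_arcs A1 (A2\<inverse>)))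
     | (V1 :: nat set) A1 (V2 :: nat set) A2.
     is_digraph V1 A1 \<and> is_digraph V2 A2 \<and> chi V1 A1 \<ge> N \<and> chi V2 A2 \<ge> N}"
    using line_digraph[OF D(1)] line_digraph[OF D(2)] l1 l2 by blast
  then have "h_fun N \<le> max (chi (lv A1 \<times> lv A2) (prod_arcs (la A1) (la A2))) (chi (lv A1 \<times> lv A2) (prod_arcs (la A1) ((la A2)\<inverse>)))"
    unfolding h_fun_def by (rule cInf_lower) simp
  then show False using gN up up2 C5 by simp
qed

lemma h_le_f: "h_fun n \<le> f_fun n"
proof -
  have "f_fun n \<in> {chi (V1 \<times> V2) (prod_arcs E1 E2) | (V1 :: nat set) E1 (V2 :: nat set) E2.
     is_graph V1 E1 \<and> is_graph V2 E2 \<and> chi V1 E1 \<ge> n \<and> chi V2 E2 \<ge> n}"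
    unfolding f_fun_def by (rule Inf_nat_def1[OF set_ne_f])
  then obtain V1 E1 V2 E2 where D: "is_graph (V1::nat set) E1" "is_graph (V2::nat set) E2" "n \<le> chi V1 E1" "n \<le> chi V2 E2"
    "f_fun n = chi (V1 \<times> V2) (prod_arcs E1 E2)" by blast
  have "E2\<inverse> = E2" using D(2) unfolding is_graph_def by (simp add: sym_conv_converse_eq)
  then have "f_fun n \<in> {max (chi (V1 \<times> V2) (prod_arcs A1 A2)) (chi (V1 \<times> V2) (prod_arcs A1 (A2\<inverse>)))
     | (V1 :: nat set) A1 (V2 :: nat set) A2.
     is_digraph V1 A1 \<and> is_digraph V2 A2 \<and> chi V1 A1 \<ge> n \<and> chi V2 A2 \<ge> n}"
    using D unfolding is_graph_def by (intro CollectI exI[of _ V1] exI[of _ E1] exI[of _ V2] exI[of _ E2]) simp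
  then show ?thesis unfolding h_fun_def by (rule cInf_lower) simp
qed

lemma f_le_16:
  assumes "h_fun n \<le> 4"
  shows "f_fun n \<le> 16"
proof -
  have "h_fun n \<in> {max (chi (V1 \<times> V2) (prod_arcs A1 A2)) (chi (V1 \<times> V2) (prod_arcs A1 (A2\<inverse>)))
     | (V1 :: nat set) A1 (V2 :: nat set) A2.
     is_digraph V1 A1 \<and> is_digraph V2 A2 \<and> chi V1 A1 \<ge> n \<and> chi V2 A2 \<ge> n}"
    unfolding h_fun_def by (rule Inf_nat_def1[OF set_ne_h])
  then obtain V1 A1 V2 A2 where D: "is_digraph (V1::nat set) A1" "is_digraph (V2::nat set) A2" "n \<le> chi V1 A1" "n \<le> chi V2 A2"
    "h_fun n = max (chi (V1 \<times> V2) (prod_arcs A1 A2)) (chi (V1 \<times> V2) (prod_arcs A1 (A2\<inverse>)))" by blast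
  obtain c where c: "\<forall>x\<in>V1\<times>V2. c x < chi (V1 \<times> V2) (prod_arcs A1 A2)"
    "\<forall>(x,y)\<in>prod_arcs A1 A2. c x \<noteq> c y"
    using chi_ex[OF prod_digraph[OF D(1,2)]] by blast
  obtain d where d: "\<forall>x\<in>V1\<times>V2. d x < chi (V1 \<times> V2) (prod_arcs A1 (A2\<inverse>))"
    "\<forall>(x,y)\<in>prod_arcs A1 (A2\<inverse>). d x \<noteq> d y"
    using chi_ex[OF prod_digraph[OF D(1) conv_digraph[OF D(2)]]] by blast
  have c': "\<forall>x\<in>V1\<times>V2. c x < 4" using c(1) D(5) assms by (metis less_le_trans max.bounded_iff)
  have d': "\<forall>x\<in>V1\<times>V2. d x < 4" using d(1) D(5) assms by (metis less_le_trans max.bounded_iff)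
  have G1: "is_graph V1 (A1 \<union> A1\<inverse>)" using D(1) unfolding is_graph_def is_digraph_def sym_def by auto
  have G2: "is_graph V2 (A2 \<union> A2\<inverse>)" using D(2) unfolding is_graph_def is_digraph_def sym_def by auto
  have n1: "n \<le> chi V1 (A1 \<union> A1\<inverse>)" using D(3) chi_mono[of V1 "A1 \<union> A1\<inverse>" A1] G1
    unfolding is_graph_def by auto
  have n2: "n \<le> chi V2 (A2 \<union> A2\<inverse>)" using D(4) chi_mono[of V2 "A2 \<union> A2\<inverse>" A2] G2
    unfolding is_graph_def by auto
  have "chi (V1 \<times> V2) (prod_arcs (A1 \<union> A1\<inverse>) (A2 \<union> A2\<inverse>)) \<le> 16"
  proof (rule chi_le[where c = "\<lambda>v. 4 * c v + d v"])
    show "\<forall>x\<in>V1 \<times> V2. 4 * c x + d x < 16"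
    proof
      fix x assume "x \<in> V1 \<times> V2"
      then have "c x < 4" "d x < 4" using c' d' by blast+
      then show "4 * c x + d x < 16" by linarith
    qed
    show "\<forall>(x,y)\<in>prod_arcs (A1 \<union> A1\<inverse>) (A2 \<union> A2\<inverse>). 4 * c x + d x \<noteq> 4 * c y + d y"
    proof (intro ballI, clarify)
      fix x y x' y'
      assume a: "((x,y),(x',y')) \<in> prod_arcs (A1 \<union> A1\<inverse>) (A2 \<union> A2\<inverse>)" "4 * c (x,y) + d (x,y) = 4 * c (x',y') + d (x',y')"
      have "(x,y) \<in> V1 \<times> V2" "(x',y') \<in> V1 \<times> V2" using a(1) D(1,2) unfolding prod_arcs_def is_digraph_def by auto
      then have lt: "d (x,y) < 4" "d (x',y') < 4" using d' by auto
      have q: "(4 * c p + d p) div 4 = c p" "(4 * c p + d p) mod 4 = d p" if "d p < 4" for p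
        using that by simp_all
      have eq: "c (x,y) = c (x',y') \<and> d (x,y) = d (x',y')" using a(2) q[OF lt(1)] q[OF lt(2)] by metis
      have "((x,y),(x',y')) \<in> prod_arcs A1 A2 \<or> ((x',y'),(x,y)) \<in> prod_arcs A1 A2 \<or>
            ((x,y),(x',y')) \<in> prod_arcs A1 (A2\<inverse>) \<or> ((x',y'),(x,y)) \<in> prod_arcs A1 (A2\<inverse>)"
        using a(1) unfolding prod_arcs_def by auto
      then show False using eq c(2) d(2) by fastforce
    qed
  qed
  moreover have "chi (V1 \<times> V2) (prod_arcs (A1 \<union> A1\<inverse>) (A2 \<union> A2\<inverse>)) \<in>
     {chi (V1 \<times> V2) (prod_arcs E1 E2) | (V1 :: nat set) E1 (V2 :: nat set) E2.
     is_graph V1 E1 \<and> is_graph V2 E2 \<and> chi V1 E1 \<ge> n \<and> chi V2 E2 \<ge> n}"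
    using G1 G2 n1 n2 by blast
  then have "f_fun n \<le> chi (V1 \<times> V2) (prod_arcs (A1 \<union> A1\<inverse>) (A2 \<union> A2\<inverse>))"
    unfolding f_fun_def by (rule cInf_lower) simp
  ultimately show ?thesis by simp
qed

theorem theorem10:
  shows "((\<exists>C::nat. \<forall>n. g_fun n \<le> C) \<longrightarrow> (LEAST C::nat. \<forall>n. g_fun n \<le> C) \<le> 4)
       \<and> ((\<exists>C::nat. \<forall>n. h_fun n \<le> C) \<longrightarrow> (LEAST C::nat. \<forall>n. h_fun n \<le> C) \<le> 4)
       \<and> ((\<exists>C::nat. \<forall>n. f_fun n \<le> C) \<longrightarrow> (LEAST C::nat. \<forall>n. f_fun n \<le> C) \<le> 16)"
proof (intro conjI impI)
  show "(LEAST C::nat. \<forall>n. g_fun n \<le> C) \<le> 4" if "\<exists>C::nat. \<forall>n. g_fun n \<le> C" using g_part that .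
  show "(LEAST C::nat. \<forall>n. h_fun n \<le> C) \<le> 4" if "\<exists>C::nat. \<forall>n. h_fun n \<le> C" using h_part that .
  assume "\<exists>C::nat. \<forall>n. f_fun n \<le> C"
  then obtain C where C: "\<forall>n. f_fun n \<le> C" by blast
  then have hb: "\<exists>C::nat. \<forall>n. h_fun n \<le> C" using h_le_f le_trans by blast
  have "\<forall>n. h_fun n \<le> (LEAST C::nat. \<forall>n. h_fun n \<le> C)" using LeastI_ex[OF hb] .
  then have "\<forall>n. h_fun n \<le> 4" using h_part[OF hb] le_trans by blast
  then have "\<forall>n. f_fun n \<le> 16" using f_le_16 by blast
  then show "(LEAST C::nat. \<forall>n. f_fun n \<le> C) \<le> 16" by (rule Least_le)
qed

end
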